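(* Let $\mathcal G\subseteq\{1,\ldots,n\}^2$ satisfy $(i,j)\in\mathcal G\iff(j,i)\in\mathcal G$, and let $1\leq N\leq|\{(i,j)\in\mathcal G: i\leq j\}|$. Define the deviation $d_{ij}$ either as the absolute deviation $|[P_k]_{ij}-[\tilde P_{k-1}]_{ij}|$ or as the relative deviation $|[P_k]_{ij}-[\tilde P_{k-1}]_{ij}|/|[\tilde P_{k-1}]_{ij}|$ (in the relative case assume $[\tilde P_{k-1}]_{ij}\neq0$ for $(i,j)\in\mathcal G$). Suppose that the index-value pairs of $\mathcal E_k$ with index in $\mathcal G$ and $i\leq j$ are exactly $N$ pairs such that $d_{ij}\geq d_{lm}$ whenever $(i,j)$ is one of them and $(l,m)\in\mathcal G$, $l\leq m$, is not; that $\mathcal E_k$ is symmetric (i.e. $((i,j),\cdot)\in\mathcal E_k\iff((j,i),\cdot)\in\mathcal E_k$); and that $\mathcal E_k$ may contain arbitrary further pairs with indices outside $\mathcal G$. For $(i,j)\in\mathcal G$ define $[\hat\Delta_k]_{ij}=0$ if $((i,j),\cdot)\in\mathcal E_k$, and otherwise $[\hat\Delta_k]_{ij}=\min_{((l,m),\cdot)\in\mathcal E_k,\,(l,m)\in\mathcal G}|[\tilde P_k]_{lm}-[\tilde P_{k-1}]_{lm}|$ in the absolute case, respectively $$[\hat\Delta_k]_{ij}=|[\tilde P_k]_{ij}|\min_{((l,m),\cdot)\in\mathcal E_k,\,(l,m)\in\mathcal G}\frac{|[\tilde P_k]_{lm}-[\tilde P_{k-1}]_{lm}|}{|[\tilde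 P_{k-1}]_{lm}|}$$ in the relative case. Then $|[\Delta_k]_{ij}|\leq[\hat\Delta_k]_{ij}$ for all $(i,j)\in\mathcal G$.
   Context: Setting (event-triggered transmission): $\mathcal S_n$ is the set of real symmetric $n\times n$ matrices. At time step $k$ a covariance matrix $P_k$ (real symmetric positive semidefinite $n\times n$) and a buffer matrix $\tilde P_{k-1}\in\mathcal S_n$ are given. The event set $\mathcal E_k$ is a set of index-value pairs $((i,j),[P_k]_{ij})$, and $((i,j),\cdot)\in\mathcal E_k$ means some pair with index $(i,j)$ lies in $\mathcal E_k$. The updated buffer $\tilde P_k$ is defined by $[\tilde P_k]_{ij}=[P_k]_{ij}$ if $((i,j),\cdot)\in\mathcal E_k$ and $[\tilde P_k]_{ij}=[\tilde P_{k-1}]_{ij}$ otherwise. The buffer error is $\Delta_k=\tilde P_k-P_k$. *)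

theory Defs
  imports Complex_Main
begin

text \<open>n x n real matrices are represented as functions nat => nat => real,
  indices ranging over 1..n. An event set is a set of index-value pairs.\<close>

definition sym_mat :: "nat \<Rightarrow> (nat \<Rightarrow> nat \<Rightarrow> real) \<Rightarrow> bool" where
  "sym_mat n A \<longleftrightarrow> (\<forall>i\<in>{1..n}. \<forall>j\<in>{1..n}. A i j = A j i)"

definition psd_mat :: "nat \<Rightarrow> (nat \<Rightarrow> nat \<Rightarrow> real) \<Rightarrow> bool" where
  "psd_mat n A \<longleftrightarrow> sym_mat n A \<and>
     (\<forall>x :: nat \<Rightarrow> real. 0 \<le> (\<Sum>i=1..n. \<Sum>j=1..n. x i * A i j * x j))"

definition ev_idx :: "((nat \<times> nat) \<times> real) set \<Rightarrow> (nat \<times> nat) set" where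
  "ev_idx E = fst ` E"

definition buf_update ::
  "(nat \<Rightarrow> nat \<Rightarrow> real) \<Rightarrow> (nat \<Rightarrow> nat \<Rightarrow> real) \<Rightarrow> ((nat \<times> nat) \<times> real) set
   \<Rightarrow> nat \<Rightarrow> nat \<Rightarrow> real" where
  "buf_update P Pold E = (\<lambda>i j. if (i, j) \<in> ev_idx E then P i j else Pold i j)"

datatype dev_kind = Absolute | Relative

definition dev :: "dev_kind \<Rightarrow> (nat \<Rightarrow> nat \<Rightarrow> real) \<Rightarrow> (nat \<Rightarrow> nat \<Rightarrow> real) \<Rightarrow> nat \<Rightarrow> nat \<Rightarrow> real" where
  "dev k P Pold i j = (case k of
      Absolute \<Rightarrow> \<bar>P i j - Pold i j\<bar>
    | Relative \<Rightarrow> \<bar>P i j - Pold i j\<bar> / \<bar>Pold i j\<bar>)"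

definition Delta_hat ::
  "dev_kind \<Rightarrow> (nat \<times> nat) set \<Rightarrow> ((nat \<times> nat) \<times> real) set
   \<Rightarrow> (nat \<Rightarrow> nat \<Rightarrow> real) \<Rightarrow> (nat \<Rightarrow> nat \<Rightarrow> real) \<Rightarrow> nat \<Rightarrow> nat \<Rightarrow> real" where
  "Delta_hat k G E Pnew Pold i j =
     (if (i, j) \<in> ev_idx E then 0
      else (case k of
        Absolute \<Rightarrow> Min {\<bar>Pnew l m - Pold l m\<bar> | l m. (l, m) \<in> ev_idx E \<and> (l, m) \<in> G}
      | Relative \<Rightarrow> \<bar>Pnew i j\<bar> *
          Min {\<bar>Pnew l m - Pold l m\<bar> / \<bar>Pold l m\<bar> | l m. (l, m) \<in> ev_idx E \<and> (l, m) \<in> G}))"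

end

theory Submission
  imports Defs
begin

theorem mainTheorem8:
  fixes n N :: nat
    and G :: "(nat \<times> nat) set"
    and P Pold :: "nat \<Rightarrow> nat \<Rightarrow> real"
    and E :: "((nat \<times> nat) \<times> real) set"
    and k :: dev_kind
  assumes G_sub: "G \<subseteq> {1..n} \<times> {1..n}"
    and G_sym: "\<forall>i j. (i, j) \<in> G \<longleftrightarrow> (j, i) \<in> G"
    and N_ge: "1 \<le> N"
    and N_le: "N \<le> card {(i, j) \<in> G. i \<le> j}"
    and P_psd: "psd_mat n P"
    and Pold_sym: "sym_mat n Pold"
    and E_vals: "\<forall>i j v. ((i, j), v) \<in> E \<longrightarrow> i \<in> {1..n} \<and> j \<in> {1..n} \<and> v = P i j"
    and rel_nz: "k = Relative \<longrightarrow> (\<forall>(i, j) \<in> G. Pold i j \<noteq> 0)"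
    and E_card: "card {p \<in> E. fst p \<in> G \<and> fst (fst p) \<le> snd (fst p)} = N"
    and E_top: "\<forall>p \<in> E. \<forall>l m. (fst p \<in> G \<and> fst (fst p) \<le> snd (fst p)
                 \<and> (l, m) \<in> G \<and> l \<le> m \<and> (l, m) \<notin> ev_idx E)
               \<longrightarrow> dev k P Pold l m \<le> dev k P Pold (fst (fst p)) (snd (fst p))"
    and E_sym: "\<forall>i j. (i, j) \<in> ev_idx E \<longleftrightarrow> (j, i) \<in> ev_idx E"
  shows "\<forall>(i, j) \<in> G. \<bar>buf_update P Pold E i j - P i j\<bar>
            \<le> Delta_hat k G E (buf_update P Pold E) Pold i j"
proof (intro ballI, clarify)
  fix i j assume ijG: "(i, j) \<in> G"
  let ?B = "buf_update P Pold E"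
  let ?D = "dev k P Pold"
  have Psym: "\<And>a b. a \<in> {1..n} \<Longrightarrow> b \<in> {1..n} \<Longrightarrow> P a b = P b a"
    using P_psd unfolding psd_mat_def sym_mat_def by blast
  have Osym: "\<And>a b. a \<in> {1..n} \<Longrightarrow> b \<in> {1..n} \<Longrightarrow> Pold a b = Pold b a"
    using Pold_sym unfolding sym_mat_def by blast
  have Dsym: "\<And>a b. (a, b) \<in> G \<Longrightarrow> ?D a b = ?D b a"
  proof -
    fix a b assume "(a, b) \<in> G"
    then have "a \<in> {1..n}" "b \<in> {1..n}" using G_sub by auto
    then have "P a b = P b a" "Pold a b = Pold b a" using Psym Osym by auto
    then show "?D a b = ?D b a" unfolding dev_def by metis
  qed
  show "\<bar>?B i j - P i j\<bar> \<le> Delta_hat k G E ?B Pold i j"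
  proof (cases "(i, j) \<in> ev_idx E")
    case True
    then show ?thesis by (simp add: buf_update_def Delta_hat_def)
  next
    case False
    define S where "S = {(l, m). (l, m) \<in> ev_idx E \<and> (l, m) \<in> G}"
    have finS: "finite S" unfolding S_def
      by (rule finite_subset[of _ "{1..n} \<times> {1..n}"]) (use G_sub in auto)
    have "{p \<in> E. fst p \<in> G \<and> fst (fst p) \<le> snd (fst p)} \<noteq> {}"
      using E_card N_ge by (metis card.empty not_one_le_zero)
    then obtain p where p: "p \<in> E" "fst p \<in> G" by blast
    have Sne: "S \<noteq> {}" using p unfolding S_def ev_idx_def by (metis (mono_tags, lifting) case_prodI2 empty_iff image_eqI mem_Collect_eq prod.collapse)
    have key: "?D i j \<le> ?D l m" if lm: "(l, m) \<in> S" for l m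
    proof -
      have jiG: "(j, i) \<in> G" using ijG G_sym by blast
      have jiE: "(j, i) \<notin> ev_idx E" using False E_sym by blast
      have lmG: "(l, m) \<in> G" and lmE: "(l, m) \<in> ev_idx E" using lm unfolding S_def by auto
      have mlG: "(m, l) \<in> G" using lmG G_sym by blast
      have mlE: "(m, l) \<in> ev_idx E" using lmE E_sym by blast
      obtain a b where ab: "(a, b) \<in> G" "(a, b) \<notin> ev_idx E" "a \<le> b" "?D a b = ?D i j"
      proof (cases "i \<le> j")
        case True then show ?thesis using that ijG False by blast
      next
        case False2: False then show ?thesis using that jiG jiE Dsym[OF ijG] by fastforce
      qed
      obtain c d where cd: "(c, d) \<in> G" "(c, d) \<in> ev_idx E" "c \<le> d" "?D c d = ?D l m"
      proof (cases "l \<le> m")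
        case True then show ?thesis using that lmG lmE by blast
      next
        case False2: False then show ?thesis using that mlG mlE Dsym[OF lmG] by fastforce
      qed
      obtain q where q: "q \<in> E" "fst q = (c, d)" using cd(2) unfolding ev_idx_def by auto
      have "?D a b \<le> ?D (fst (fst q)) (snd (fst q))"
      proof -
        have "fst q \<in> G \<and> fst (fst q) \<le> snd (fst q) \<and> (a, b) \<in> G \<and> a \<le> b \<and> (a, b) \<notin> ev_idx E"
          using q(2) ab(1,2,3) cd(1,3) by simp
        then show ?thesis using E_top q(1) by blast
      qed
      then show ?thesis using q ab cd by simp
    qed
    have Bij: "?B i j = Pold i j" using False by (simp add: buf_update_def)
    have Blm: "?B l m = P l m" if "(l, m) \<in> S" for l m
      using that unfolding S_def by (simp add: buf_update_def)
    show ?thesis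
    proof (cases k)
      case Absolute
      have eqS: "{\<bar>?B l m - Pold l m\<bar> | l m. (l, m) \<in> ev_idx E \<and> (l, m) \<in> G}
          = (\<lambda>(l, m). \<bar>P l m - Pold l m\<bar>) ` S"
        unfolding S_def by (auto simp: buf_update_def)
      have "\<bar>Pold i j - P i j\<bar> \<le> Min ((\<lambda>(l, m). \<bar>P l m - Pold l m\<bar>) ` S)"
        using finS Sne key Absolute by (auto simp: Min_ge_iff dev_def abs_minus_commute)
      then show ?thesis using False Absolute Bij eqS by (simp add: Delta_hat_def)
    next
      case Relative
      have nz: "Pold i j \<noteq> 0" using rel_nz Relative ijG by auto
      have eqS: "{\<bar>?B l m - Pold l m\<bar> / \<bar>Pold l m\<bar> | l m. (l, m) \<in> ev_idx E \<and> (l, m) \<in> G}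
          = (\<lambda>(l, m). \<bar>P l m - Pold l m\<bar> / \<bar>Pold l m\<bar>) ` S"
        unfolding S_def by (auto simp: buf_update_def)
      have M: "\<bar>P i j - Pold i j\<bar> / \<bar>Pold i j\<bar> \<le> Min ((\<lambda>(l, m). \<bar>P l m - Pold l m\<bar> / \<bar>Pold l m\<bar>) ` S)"
        using finS Sne key Relative by (auto simp: Min_ge_iff dev_def)
      have "\<bar>Pold i j - P i j\<bar> = \<bar>Pold i j\<bar> * (\<bar>P i j - Pold i j\<bar> / \<bar>Pold i j\<bar>)"
        using nz by (simp add: abs_minus_commute)
      also have "\<dots> \<le> \<bar>Pold i j\<bar> * Min ((\<lambda>(l, m). \<bar>P l m - Pold l m\<bar> / \<bar>Pold l m\<bar>) ` S)"
        using M by (rule mult_left_mono) simp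
      finally show ?thesis using False Relative Bij eqS by (simp add: Delta_hat_def)
    qed
  qed
qed

end
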